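(* Let $\lambda_1,\dots,\lambda_8$ be the Gell-Mann matrices (traceless Hermitian $3\times3$ matrices forming a basis of $i\,\mathfrak{su}_3$ with $\operatorname{Tr}(\lambda_a\lambda_b)=2\delta_{ab}$), and for $v\in\mathbb R^8$ write $v\lambda=\sum_av_a\lambda_a$. Then $\frac13(\mathbf 1+v\lambda)$ is a density matrix if and only if $$|v|^2\le\min\big(3,\ 1+\det(v\lambda)\big).$$
   Context: A density matrix is a positive semidefinite Hermitian matrix of trace 1. *)

theory Defs
  imports "HOL-Analysis.Analysis"
begin

type_synonym cmat3 = "complex^3^3"

definition adjoint3 :: "cmat3 \<Rightarrow> cmat3" where
  "adjoint3 A = (\<chi> i j. cnj (A $ j $ i))"

definition hermitian3 :: "cmat3 \<Rightarrow> bool" where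
  "hermitian3 A \<longleftrightarrow> adjoint3 A = A"

definition qform3 :: "cmat3 \<Rightarrow> complex^3 \<Rightarrow> complex" where
  "qform3 A x = (\<Sum>i\<in>UNIV. cnj (x $ i) * (A *v x) $ i)"

definition psd3 :: "cmat3 \<Rightarrow> bool" where
  "psd3 A \<longleftrightarrow> hermitian3 A \<and> (\<forall>x. Im (qform3 A x) = 0 \<and> Re (qform3 A x) \<ge> 0)"

definition density_matrix3 :: "cmat3 \<Rightarrow> bool" where
  "density_matrix3 A \<longleftrightarrow> psd3 A \<and> trace A = 1"

definition smult3 :: "complex \<Rightarrow> cmat3 \<Rightarrow> cmat3" where
  "smult3 c A = (\<chi> i j. c * A $ i $ j)"

definition gell_mann :: "nat \<Rightarrow> cmat3" where
  "gell_mann a =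
    (if a = 1 then vector [vector [0, 1, 0], vector [1, 0, 0], vector [0, 0, 0]]
     else if a = 2 then vector [vector [0, -\<i>, 0], vector [\<i>, 0, 0], vector [0, 0, 0]]
     else if a = 3 then vector [vector [1, 0, 0], vector [0, -1, 0], vector [0, 0, 0]]
     else if a = 4 then vector [vector [0, 0, 1], vector [0, 0, 0], vector [1, 0, 0]]
     else if a = 5 then vector [vector [0, 0, -\<i>], vector [0, 0, 0], vector [\<i>, 0, 0]]
     else if a = 6 then vector [vector [0, 0, 0], vector [0, 0, 1], vector [0, 1, 0]]
     else if a = 7 then vector [vector [0, 0, 0], vector [0, 0, -\<i>], vector [0, \<i>, 0]]
     else if a = 8 then smult3 (complex_of_real (1 / sqrt 3))
                          (vector [vector [1, 0, 0], vector [0, 1, 0], vector [0, 0, -2]])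
     else 0)"

definition vlam :: "(nat \<Rightarrow> real) \<Rightarrow> cmat3" where
  "vlam v = (\<Sum>a\<in>{1..8}. smult3 (complex_of_real (v a)) (gell_mann a))"

definition sqnorm8 :: "(nat \<Rightarrow> real) \<Rightarrow> real" where
  "sqnorm8 v = (\<Sum>a\<in>{1..8}. (v a)^2)"

end

theory Submission
  imports Defs
begin


definition cin :: "complex^3 \<Rightarrow> complex^3 \<Rightarrow> complex" where
  "cin x y = (\<Sum>i\<in>UNIV. cnj (x$i) * y$i)"

definition e2c :: "cmat3 \<Rightarrow> complex" where
  "e2c A = A$1$1*A$2$2 - A$1$2*A$2$1 + A$1$1*A$3$3 - A$1$3*A$3$1 + A$2$2*A$3$3 - A$2$3*A$3$2"

lemma herm_entry: "hermitian3 A \<Longrightarrow> A$i$j = cnj (A$j$i)"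
  unfolding hermitian3_def adjoint3_def by (metis vec_lambda_beta)

lemma qform_cin: "qform3 A x = cin x (A *v x)"
  unfolding qform3_def cin_def by simp

lemma adj_move: assumes "hermitian3 A" shows "cin x (A *v y) = cin (A *v x) y"
proof -
  have h: "\<And>i j. cnj (A$i$j) = A$j$i" using herm_entry[OF assms] by (metis complex_cnj_cnj)
  show ?thesis unfolding cin_def matrix_vector_mult_def
    by (simp add: sum_3 h algebra_simps)
qed

lemma cnj_sq: "cnj z * z = of_real ((cmod z)^2)"
  by (metis complex_norm_square mult.commute of_real_power)

lemma cin_self: "cin x x = of_real (\<Sum>i\<in>UNIV. (cmod (x$i))^2)"
  unfolding cin_def by (simp add: cnj_sq)

lemma cin_self_nonneg: "0 \<le> (\<Sum>i\<in>UNIV. (cmod ((x::complex^3)$i))^2)"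
  by (simp add: sum_nonneg)

lemma cin_self_zero: assumes "(\<Sum>i\<in>UNIV. (cmod ((x::complex^3)$i))^2) = 0" shows "x = 0"
proof -
  have "\<forall>i\<in>UNIV. (cmod (x$i))^2 = 0"
    using sum_nonneg_eq_0_iff[of UNIV "\<lambda>i. (cmod (x$i))^2"] assms by simp
  then show ?thesis by (simp add: vec_eq_iff)
qed

lemma cin_add1: "cin (u + w) y = cin u y + cin w y"
  unfolding cin_def by (simp add: algebra_simps sum.distrib)
lemma cin_add2: "cin y (u + w) = cin y u + cin y w"
  unfolding cin_def by (simp add: algebra_simps sum.distrib)
lemma cin_scale1: "cin (c *s u) y = cnj c * cin u y"
  unfolding cin_def by (simp add: algebra_simps sum_distrib_left)
lemma cin_scale2: "cin y (c *s u) = c * cin y u"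
  unfolding cin_def by (simp add: algebra_simps sum_distrib_left)
lemma cin_sub2: "cin y (u - w) = cin y u - cin y w"
  unfolding cin_def by (simp add: algebra_simps sum_subtractf)


lemma CH: "A *v (A *v (A *v z)) = trace A *s (A *v (A *v z)) - e2c A *s (A *v z) + det A *s z"
  unfolding vec_eq_iff forall_3
  apply (simp add: matrix_vector_mult_def sum_3 det_3 trace_def e2c_def)
  apply (intro conjI)
  by algebra+


lemma mat_mult: "mat c *v (z::complex^3) = c *s z"
  unfolding vec_eq_iff forall_3 by (simp add: matrix_vector_mult_def mat_def sum_3)

lemma im0: "cnj z = z \<Longrightarrow> Im z = 0"
proof -
  assume h: "cnj z = z"
  have "Im (cnj z) = Im z" by (simp only: h)
  then show ?thesis by simp
qed

lemma herm_real:
  assumes "hermitian3 A"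
  shows "Im (trace A) = 0" "Im (e2c A) = 0" "Im (det A) = 0"
proof -
  have h: "\<And>i j. cnj (A$i$j) = A$j$i" using herm_entry[OF assms] by (metis complex_cnj_cnj)
  show "Im (trace A) = 0" by (rule im0) (simp add: trace_def sum_3 h)
  show "Im (e2c A) = 0" by (rule im0) (simp add: e2c_def h algebra_simps)
  show "Im (det A) = 0" by (rule im0) (simp add: det_3 h algebra_simps)
qed

lemma det_shift: "det (mat t - A) = t^3 - trace A * t^2 + e2c A * t - det (A::cmat3)"
  by (simp add: det_3 trace_def e2c_def mat_def sum_3 algebra_simps power2_eq_square power3_eq_cube)

lemma eps_shift:
  "trace (A + mat e) = trace A + 3 * e"
  "e2c (A + mat e) = e2c A + 2 * trace A * e + 3 * e^2"
  "det (A + mat e) = det (A::cmat3) + e2c A * e + trace A * e^2 + e^3"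
  by (simp_all add: det_3 trace_def e2c_def mat_def sum_3 algebra_simps power2_eq_square power3_eq_cube)


definition nrm :: "complex^3 \<Rightarrow> real" where "nrm x = (\<Sum>i\<in>UNIV. (cmod (x$i))^2)"

lemma nrm_nonneg: "0 \<le> nrm x" unfolding nrm_def by (rule cin_self_nonneg)
lemma cin_nrm: "cin x x = of_real (nrm x)" unfolding nrm_def by (rule cin_self)
lemma nrm_zero: "nrm x = 0 \<Longrightarrow> x = 0" unfolding nrm_def by (rule cin_self_zero)

lemma surj_of_inj:
  fixes B :: cmat3
  assumes "\<forall>z. B *v z = 0 \<longrightarrow> z = 0"
  shows "\<exists>z. B *v z = x"
proof -
  obtain C where "C ** B = mat 1" using assms matrix_left_invertible_ker by blast
  then have "B ** C = mat 1" using matrix_left_right_inverse by blast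
  then have "surj (\<lambda>z. B *v z)" using matrix_right_invertible_surjective by blast
  then show ?thesis by (metis surjD)
qed

lemma psd_pd:
  assumes H: "hermitian3 A" and t: "trace A = of_real r1" "r1 \<ge> 0"
    and e: "e2c A = of_real r2" "r2 > 0" and d: "det A = of_real r3" "r3 \<ge> 0"
  shows "Re (qform3 A x) \<ge> 0"
proof -
  define B where "B = A ** A + mat (of_real r2)"
  have Bv: "B *v z = A *v (A *v z) + of_real r2 *s z" for z
    unfolding B_def by (simp add: matrix_vector_mult_add_rdistrib matrix_vector_mul_assoc mat_mult)
  have inj: "\<forall>z. B *v z = 0 \<longrightarrow> z = 0"
  proof (intro allI impI)
    fix z assume "B *v z = 0"
    then have "cin z (B *v z) = 0" by (simp add: cin_def)
    moreover have "cin z (B *v z) = of_real (nrm (A *v z) + r2 * nrm z)"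
      by (simp add: Bv cin_add2 cin_scale2 adj_move[OF H] cin_nrm)
    ultimately have "nrm (A *v z) + r2 * nrm z = 0" by (metis of_real_eq_0_iff)
    then have "nrm z = 0" using nrm_nonneg[of "A *v z"] nrm_nonneg[of z] e(2)
      by (smt (verit) mult_pos_pos)
    then show "z = 0" by (rule nrm_zero)
  qed
  obtain z where xz: "B *v z = x" using surj_of_inj[OF inj] by blast
  have Ax: "A *v x = of_real r1 *s (A *v (A *v z)) + of_real r3 *s z"
    using CH[of A z] unfolding xz[symmetric] Bv t e d
    by (simp add: matrix_vector_right_distrib vector_scalar_commute algebra_simps)
  have "qform3 A x = cin (A *v (A *v z) + of_real r2 *s z) (of_real r1 *s (A *v (A *v z)) + of_real r3 *s z)"
    unfolding qform_cin Ax using xz Bv by simp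
  also have "\<dots> = of_real r1 * cin (A *v (A *v z)) (A *v (A *v z)) + of_real r3 * cin (A *v (A *v z)) z
      + of_real r2 * of_real r1 * cin z (A *v (A *v z)) + of_real r2 * of_real r3 * cin z z"
    by (simp add: cin_add1 cin_add2 cin_scale1 cin_scale2 algebra_simps)
  also have "\<dots> = of_real (r1 * nrm (A *v (A *v z)) + r3 * nrm (A *v z) + r2 * r1 * nrm (A *v z) + r2 * r3 * nrm z)"
    by (simp add: adj_move[OF H, symmetric] adj_move[OF H] cin_nrm)
  finally show ?thesis
    using nrm_nonneg[of "A *v (A *v z)"] nrm_nonneg[of "A *v z"] nrm_nonneg[of z] t(2) e(2) d(2)
    by simp
qed


lemma herm_add_mat: "hermitian3 A \<Longrightarrow> hermitian3 (A + mat (of_real e))"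
proof -
  assume H: "hermitian3 A"
  have h: "\<And>i j. cnj (A$i$j) = A$j$i" using herm_entry[OF H] by (metis complex_cnj_cnj)
  show ?thesis unfolding hermitian3_def adjoint3_def by (simp add: vec_eq_iff mat_def h)
qed

lemma qform_add_mat: "qform3 (A + mat c) x = qform3 A x + c * cin x x"
  by (simp add: qform_cin matrix_vector_mult_add_rdistrib mat_mult cin_add2 cin_scale2)

lemma psd_semi:
  assumes H: "hermitian3 A" and t: "trace A = of_real r1" "r1 \<ge> 0"
    and e: "e2c A = of_real r2" "r2 \<ge> 0" and d: "det A = of_real r3" "r3 \<ge> 0"
  shows "Re (qform3 A x) \<ge> 0"
proof (rule ccontr)
  assume "\<not> ?thesis"
  then have q: "Re (qform3 A x) < 0" by simp
  define ep where "ep = - Re (qform3 A x) / (2 * (nrm x + 1))"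
  have n0: "nrm x \<ge> 0" by (rule nrm_nonneg)
  have ep0: "ep > 0" unfolding ep_def using q n0 by (intro divide_pos_pos) auto
  have epb: "ep * (nrm x + 1) = - Re (qform3 A x) / 2" unfolding ep_def using n0 by (simp add: field_simps)
  have "Re (qform3 (A + mat (of_real ep)) x) \<ge> 0"
  proof (rule psd_pd[OF herm_add_mat[OF H]])
    show "trace (A + mat (of_real ep)) = of_real (r1 + 3 * ep)" by (simp add: eps_shift t)
    show "e2c (A + mat (of_real ep)) = of_real (r2 + 2 * r1 * ep + 3 * ep^2)" by (simp add: eps_shift t e)
    show "det (A + mat (of_real ep)) = of_real (r3 + r2 * ep + r1 * ep^2 + ep^3)" by (simp add: eps_shift t e d)
    show "r1 + 3 * ep \<ge> 0" using t ep0 by simp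
    show "r2 + 2 * r1 * ep + 3 * ep^2 > 0" using e t ep0 by (simp add: add_nonneg_pos)
    show "r3 + r2 * ep + r1 * ep^2 + ep^3 \<ge> 0" using e t d ep0 by simp
  qed
  then have "Re (qform3 A x) + ep * nrm x \<ge> 0" by (simp add: qform_add_mat cin_nrm)
  moreover have "ep * nrm x \<le> ep * (nrm x + 1)" using ep0 by simp
  ultimately show False using epb q by linarith
qed

lemma qform_two:
  fixes A :: cmat3
  assumes "i \<noteq> j"
  shows "qform3 A (\<chi> k. if k = i then \<alpha> else if k = j then \<beta> else 0) =
     cnj \<alpha> * (A$i$i * \<alpha> + A$i$j * \<beta>) + cnj \<beta> * (A$j$i * \<alpha> + A$j$j * \<beta>)"
  using exhaust_3[of i] exhaust_3[of j] assms
  by (auto simp: qform3_def matrix_vector_mult_def sum_3 algebra_simps)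

lemma psd_minor:
  fixes A :: cmat3
  assumes P: "psd3 A" and ij: "i \<noteq> j"
  shows "Re (A$i$i * A$j$j - A$i$j * A$j$i) \<ge> 0"
proof -
  have H: "hermitian3 A" using P psd3_def by blast
  have Q: "\<And>x. Re (qform3 A x) \<ge> 0" using P psd3_def by blast
  define a where "a = Re (A$i$i)"
  define d where "d = Re (A$j$j)"
  define b where "b = A$i$j"
  have Ai: "A$i$i = of_real a" unfolding a_def
    using im0[of "A$i$i"] herm_entry[OF H, of i i] by (simp add: complex_eq_iff)
  have Aj: "A$j$j = of_real d" unfolding d_def
    using im0[of "A$j$j"] herm_entry[OF H, of j j] by (simp add: complex_eq_iff)
  have Aji: "A$j$i = cnj b" unfolding b_def using herm_entry[OF H, of j i] .
  have m: "Re (A$i$i * A$j$j - A$i$j * A$j$i) = a * d - (Re b ^2 + Im b^2)"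
    unfolding Ai Aj Aji b_def[symmetric] by (simp add: power2_eq_square)
  have q: "Re (qform3 A (\<chi> k. if k = i then \<alpha> else if k = j then \<beta> else 0)) =
     Re (cnj \<alpha> * (of_real a * \<alpha> + b * \<beta>) + cnj \<beta> * (cnj b * \<alpha> + of_real d * \<beta>))" for \<alpha> \<beta>
    unfolding qform_two[OF ij] Ai Aj Aji b_def by simp
  have 1: "a * (a * d - (Re b ^2 + Im b^2)) \<ge> 0"
    using Q[of "\<chi> k. if k = i then - b else if k = j then of_real a else 0"] unfolding q
    by (simp add: algebra_simps power2_eq_square)
  have 2: "d * (a * d - (Re b ^2 + Im b^2)) \<ge> 0"
    using Q[of "\<chi> k. if k = i then of_real d else if k = j then - cnj b else 0"] unfolding q
    by (simp add: algebra_simps power2_eq_square)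
  have 3: "a * (Re b ^2 + Im b^2) - 2 * (Re b ^2 + Im b^2) + d \<ge> 0"
    using Q[of "\<chi> k. if k = i then - b else if k = j then 1 else 0"] unfolding q
    by (simp add: algebra_simps power2_eq_square)
  have a0: "a \<ge> 0"
    using Q[of "\<chi> k. if k = i then 1 else if k = j then 0 else 0"] unfolding q by simp
  have d0: "d \<ge> 0"
    using Q[of "\<chi> k. if k = i then 0 else if k = j then 1 else 0"] unfolding q by simp
  have "a * d - (Re b ^2 + Im b^2) \<ge> 0"
  proof (cases "a > 0")
    case True then show ?thesis using 1 by (simp add: zero_le_mult_iff)
  next
    case False
    then have a: "a = 0" using a0 by simp
    show ?thesis
    proof (cases "d > 0")
      case True then show ?thesis using 2 by (simp add: zero_le_mult_iff)
    next
      case False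
      then have "d = 0" using d0 by simp
      then show ?thesis using 3 a by (simp add: add_nonneg_nonneg)
    qed
  qed
  then show ?thesis using m by simp
qed

lemma psd_e2: "psd3 A \<Longrightarrow> Re (e2c A) \<ge> 0"
  using psd_minor[of A 1 2] psd_minor[of A 1 3] psd_minor[of A 2 3]
  unfolding e2c_def by simp


lemma ker_of_det0:
  fixes B :: cmat3
  assumes "det B = 0"
  shows "\<exists>x. x \<noteq> 0 \<and> B *v x = 0"
proof (rule ccontr)
  assume "\<not> ?thesis"
  then have "\<forall>x. B *v x = 0 \<longrightarrow> x = 0" by blast
  then obtain C where C: "C ** B = mat 1" using matrix_left_invertible_ker by blast
  then have "B ** C = mat 1" using matrix_left_right_inverse by blast
  then have "invertible B" using C invertible_def by blast
  then show False using assms invertible_det_nz by blast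
qed

lemma poly_neg:
  fixes r1 r2 r3 :: real
  defines "M \<equiv> 1 + \<bar>r1\<bar> + \<bar>r2\<bar> + \<bar>r3\<bar>"
  shows "(-M)^3 - r1 * (-M)^2 + r2 * (-M) - r3 < 0"
proof -
  have M1: "M \<ge> 1" unfolding M_def by simp
  have a: "(- r1) * M^2 \<le> \<bar>r1\<bar> * M^2" by (rule mult_right_mono) auto
  have b: "- r2 * M \<le> \<bar>r2\<bar> * M^2"
  proof -
    have "(- r2) * M \<le> \<bar>r2\<bar> * M" using M1 by (intro mult_right_mono) auto
    also have "\<dots> \<le> \<bar>r2\<bar> * M^2" using M1 by (intro mult_left_mono) (auto simp: power2_eq_square)
    finally show ?thesis .
  qed
  have c: "- r3 \<le> \<bar>r3\<bar> * M^2" using M1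
    by (smt (verit) mult_left_mono one_le_power power2_eq_square mult_cancel_left1 abs_ge_zero)
  have "(-M)^3 - r1 * (-M)^2 + r2 * (-M) - r3 = -(M^3) - r1 * M^2 - r2 * M - r3"
    by (simp add: power2_eq_square power3_eq_cube)
  also have "\<dots> \<le> -(M^3) + (\<bar>r1\<bar> + \<bar>r2\<bar> + \<bar>r3\<bar>) * M^2" using a b c by (simp add: algebra_simps)
  also have "\<dots> = -(M^2)" unfolding M_def by (simp add: power2_eq_square power3_eq_cube algebra_simps)
  also have "\<dots> < 0" using M1 by simp
  finally show ?thesis .
qed

lemma psd_det:
  assumes P: "psd3 A" shows "Re (det A) \<ge> 0"
proof (rule ccontr)
  assume neg: "\<not> ?thesis"
  have H: "hermitian3 A" using P psd3_def by blast
  have Q: "\<And>x. Re (qform3 A x) \<ge> 0" using P psd3_def by blast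
  define r1 where "r1 = Re (trace A)"
  define r2 where "r2 = Re (e2c A)"
  define r3 where "r3 = Re (det A)"
  have t: "trace A = of_real r1" unfolding r1_def using herm_real(1)[OF H] by (simp add: complex_eq_iff)
  have e: "e2c A = of_real r2" unfolding r2_def using herm_real(2)[OF H] by (simp add: complex_eq_iff)
  have d: "det A = of_real r3" unfolding r3_def using herm_real(3)[OF H] by (simp add: complex_eq_iff)
  have r3: "r3 < 0" using neg r3_def by simp
  define g where "g t = t^3 - r1 * t^2 + r2 * t - r3" for t :: real
  define M where "M = 1 + \<bar>r1\<bar> + \<bar>r2\<bar> + \<bar>r3\<bar>"
  have gM: "g (-M) \<le> 0" unfolding g_def M_def using poly_neg[of r1 r2 r3] by simp
  have g0: "0 \<le> g 0" unfolding g_def using r3 by simp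
  have cont: "\<forall>t. isCont g t" unfolding g_def[abs_def] by (intro allI continuous_intros)
  have "\<exists>t\<ge>-M. t \<le> 0 \<and> g t = 0"
    by (rule IVT[of g "-M" 0 0, OF gM g0]) (use cont in \<open>auto simp: M_def\<close>)
  then obtain t0 where t0: "t0 \<le> 0" "g t0 = 0" by blast
  have t0n: "t0 < 0" using t0 g0 r3 unfolding g_def by (cases "t0 = 0") auto
  have "det (mat (of_real t0) - A) = of_real (g t0)"
    unfolding det_shift t e d g_def by simp
  then have "det (mat (of_real t0) - A) = 0" using t0 by simp
  then obtain x where x: "x \<noteq> 0" "(mat (of_real t0) - A) *v x = 0" using ker_of_det0 by blast
  have Ax: "A *v x = of_real t0 *s x" using x(2) by (simp add: matrix_vector_mult_diff_rdistrib mat_mult)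
  have "qform3 A x = of_real (t0 * nrm x)" by (simp add: qform_cin Ax cin_scale2 cin_nrm)
  moreover have "nrm x > 0" using nrm_nonneg[of x] nrm_zero[of x] x(1) by fastforce
  ultimately have "Re (qform3 A x) < 0" using t0n by (simp add: mult_neg_pos)
  then show False using Q[of x] by simp
qed

lemma cin_cnj: "cnj (cin u w) = cin w u"
  unfolding cin_def by (simp add: mult.commute)

lemma psd_char:
  assumes H: "hermitian3 A" and tr: "trace A = 1"
  shows "psd3 A \<longleftrightarrow> Re (e2c A) \<ge> 0 \<and> Re (det A) \<ge> 0"
proof
  assume "psd3 A" then show "Re (e2c A) \<ge> 0 \<and> Re (det A) \<ge> 0" using psd_e2 psd_det by blast
next
  assume a: "Re (e2c A) \<ge> 0 \<and> Re (det A) \<ge> 0"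
  have e: "e2c A = of_real (Re (e2c A))" using herm_real(2)[OF H] by (simp add: complex_eq_iff)
  have d: "det A = of_real (Re (det A))" using herm_real(3)[OF H] by (simp add: complex_eq_iff)
  have "Re (qform3 A x) \<ge> 0" for x
    using psd_semi[OF H _ _ e _ d, of 1] tr a by simp
  moreover have "Im (qform3 A x) = 0" for x
  proof -
    have "cnj (qform3 A x) = qform3 A x"
      unfolding qform_cin
      using adj_move[OF H, of x x] cin_cnj[of x "A *v x"] by simp
    then show ?thesis by (rule im0)
  qed
  ultimately show "psd3 A" using H psd3_def by blast
qed


lemma smult_ids:
  "trace (smult3 c B) = c * trace B"
  "e2c (smult3 c B) = c^2 * e2c B"
  "det (smult3 c B) = c^3 * det B"
  by (simp_all add: smult3_def det_3 trace_def e2c_def sum_3 algebra_simps power2_eq_square power3_eq_cube)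

lemma id_ids:
  "trace (mat 1 + B) = 3 + trace B"
  "e2c (mat 1 + B) = 3 + 2 * trace B + e2c B"
  "det (mat 1 + B) = 1 + trace B + e2c B + det (B::cmat3)"
  using eps_shift[of B 1] by (simp_all add: add.commute add.left_commute)

lemma herm_smult: "hermitian3 B \<Longrightarrow> hermitian3 (smult3 (1/3) B)"
proof -
  assume H: "hermitian3 B"
  have h: "\<And>i j. cnj (B$i$j) = B$j$i" using herm_entry[OF H] by (metis complex_cnj_cnj)
  show ?thesis unfolding hermitian3_def adjoint3_def smult3_def by (simp add: vec_eq_iff h)
qed

lemma herm_id: "hermitian3 B \<Longrightarrow> hermitian3 (mat 1 + B)"
  using herm_add_mat[of B 1] by (simp add: add.commute)

lemma vlam_entry: "vlam v $ i $ j = (\<Sum>a\<in>{1..8}. of_real (v a) * gell_mann a $ i $ j)"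
  unfolding vlam_def smult3_def by simp

lemma set18: "{1..8::nat} = {1,2,3,4,5,6,7,8}" by auto

lemma vlam_entries:
  "vlam v $ 1 $ 1 = of_real (v 3 + v 8 / sqrt 3)"
  "vlam v $ 2 $ 2 = of_real (- v 3 + v 8 / sqrt 3)"
  "vlam v $ 3 $ 3 = of_real (- 2 * v 8 / sqrt 3)"
  "vlam v $ 1 $ 2 = Complex (v 1) (- v 2)"
  "vlam v $ 2 $ 1 = Complex (v 1) (v 2)"
  "vlam v $ 1 $ 3 = Complex (v 4) (- v 5)"
  "vlam v $ 3 $ 1 = Complex (v 4) (v 5)"
  "vlam v $ 2 $ 3 = Complex (v 6) (- v 7)"
  "vlam v $ 3 $ 2 = Complex (v 6) (v 7)"
  unfolding vlam_entry set18 by (simp_all add: gell_mann_def smult3_def complex_eq_iff)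


lemma herm_vlam: "hermitian3 (vlam v)"
  unfolding hermitian3_def adjoint3_def vec_eq_iff forall_3
  by (simp add: vlam_entries complex_eq_iff)

lemma trace_vlam: "trace (vlam v) = 0"
  by (simp add: trace_def sum_3 vlam_entries complex_eq_iff)

lemma e2c_vlam: "Re (e2c (vlam v)) = - sqnorm8 v"
proof -
  have s: "sqrt 3 * sqrt 3 = (3::real)" by simp
  have "Re (e2c (vlam v)) = (v 3 + v 8 / sqrt 3) * (- v 3 + v 8 / sqrt 3)
     - (v 1 * v 1 + v 2 * v 2) + (v 3 + v 8 / sqrt 3) * (- 2 * v 8 / sqrt 3) - (v 4 * v 4 + v 5 * v 5)
     + (- v 3 + v 8 / sqrt 3) * (- 2 * v 8 / sqrt 3) - (v 6 * v 6 + v 7 * v 7)"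
    by (simp add: e2c_def vlam_entries)
  also have "\<dots> = - sqnorm8 v"
    unfolding sqnorm8_def set18 by (simp add: field_simps power2_eq_square s)
  finally show ?thesis .
qed

theorem mainTheorem17:
  fixes v :: "nat \<Rightarrow> real"
  shows "density_matrix3 (smult3 (1/3) (mat 1 + vlam v)) \<longleftrightarrow>
         sqnorm8 v \<le> min 3 (1 + Re (det (vlam v)))"
proof -
  let ?R = "smult3 (1/3) (mat 1 + vlam v)"
  have H: "hermitian3 ?R" by (intro herm_smult herm_id herm_vlam)
  have tr: "trace ?R = 1" by (simp add: smult_ids id_ids trace_vlam)
  have e: "Re (e2c ?R) = (3 - sqnorm8 v) / 9"
    by (simp add: smult_ids id_ids trace_vlam e2c_vlam power2_eq_square)
  have d: "Re (det ?R) = (1 - sqnorm8 v + Re (det (vlam v))) / 27"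
    by (simp add: smult_ids id_ids trace_vlam e2c_vlam power3_eq_cube)
  show ?thesis
    unfolding density_matrix3_def psd_char[OF H tr] e d using tr by auto
qed

end
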